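(* Let $\mathcal H$ be a graded connected Hopf algebra over a field $\Bbbk$, let $\zeta\colon\mathcal H\to\Bbbk$ be a character of $\mathcal H$ and $\eta\colon\mathcal H^*\to\Bbbk$ a character of its graded dual (no compatibility between $\zeta$ and $\eta$ is assumed). If $\zeta$ is even (respectively, odd), then each component $\zeta_n=\zeta|_{\mathcal H_n}$ belongs to $S_+(\mathcal H^*,\eta)$ (respectively, $S_-(\mathcal H^*,\eta)$).
   Context: $\mathcal H=\bigoplus_{n\ge0}\mathcal H_n$ is graded connected with finite-dimensional components, and $\mathcal H^*=\bigoplus_n(\mathcal H_n)^*$ is its graded dual Hopf algebra (also graded connected with finite-dimensional components), so $\zeta_n\in\mathcal H^*$ is homogeneous of degree $n$. For any such Hopf algebra $\mathcal K$ and character $\theta$: characters multiply by convolution, $\theta^{-1}=\theta\circ S$, $\bar\theta(k)=(-1)^n\theta(k)$ for $k\in\mathcal K_n$; $\theta$ is even if $\bar\theta=\theta$, odd if $\bar\theta=\theta^{-1}$. $S_+(\mathcal K,\theta)$ (resp. $S_-(\mathcal K,\theta)$) is the largest graded subcoalgebra of $\mathcal K$ on which $\bar\theta$ agrees with $\theta$ (resp. with $\theta^{-1}$). *)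

theory Defs
  imports Main
begin

text \<open>
  A graded connected Hopf algebra with finite-dimensional homogeneous components over a
  field 'k is encoded by a homogeneous basis indexed by the type 'b together with its
  structure constants:
  deg b is the degree of the basis vector b; the unit is the basis vector hunit;
  b1 * b2 = sum over c of hmult b1 b2 c times c;
  Delta b = sum over (c1,c2) of hcomult b c1 c2 times (c1 tensor c2);
  S b = sum over c of hantip b c times c.
  Elements of the algebra are finitely supported coefficient functions 'b => 'k.
\<close>

record ('b, 'k) hopf_data =
  hdeg :: "'b \<Rightarrow> nat"
  hunit :: 'b
  hmult :: "'b \<Rightarrow> 'b \<Rightarrow> 'b \<Rightarrow> 'k"
  hcomult :: "'b \<Rightarrow> 'b \<Rightarrow> 'b \<Rightarrow> 'k"
  hantip :: "'b \<Rightarrow> 'b \<Rightarrow> 'k"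

definition Deg :: "('b, 'k) hopf_data \<Rightarrow> nat \<Rightarrow> 'b set" where
  "Deg K n = {b. hdeg K b = n}"

definition Split :: "('b, 'k) hopf_data \<Rightarrow> nat \<Rightarrow> ('b \<times> 'b) set" where
  "Split K n = {(u, v). hdeg K u + hdeg K v = n}"

definition hcounit :: "('b, 'k::field) hopf_data \<Rightarrow> 'b \<Rightarrow> 'k" where
  "hcounit K b = (if b = hunit K then 1 else 0)"

definition is_hopf :: "('b, 'k::field) hopf_data \<Rightarrow> bool" where
  "is_hopf K \<longleftrightarrow>
     \<comment> \<open>finite-dimensional components, connected\<close>
     (\<forall>n. finite (Deg K n)) \<and> Deg K 0 = {hunit K} \<and>
     \<comment> \<open>grading of the structure maps\<close>
     (\<forall>a b c. hmult K a b c \<noteq> 0 \<longrightarrow> hdeg K c = hdeg K a + hdeg K b) \<and>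
     (\<forall>a b c. hcomult K a b c \<noteq> 0 \<longrightarrow> hdeg K b + hdeg K c = hdeg K a) \<and>
     (\<forall>a b. hantip K a b \<noteq> 0 \<longrightarrow> hdeg K b = hdeg K a) \<and>
     \<comment> \<open>unit and associativity\<close>
     (\<forall>a c. hmult K (hunit K) a c = (if a = c then 1 else 0)) \<and>
     (\<forall>a c. hmult K a (hunit K) c = (if a = c then 1 else 0)) \<and>
     (\<forall>a b c d. (\<Sum>x\<in>Deg K (hdeg K a + hdeg K b). hmult K a b x * hmult K x c d) =
                (\<Sum>y\<in>Deg K (hdeg K b + hdeg K c). hmult K b c y * hmult K a y d)) \<and>
     \<comment> \<open>counit and coassociativity\<close>
     (\<forall>a c. (\<Sum>u\<in>Deg K 0. hcounit K u * hcomult K a u c) = (if a = c then 1 else 0)) \<and>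
     (\<forall>a c. (\<Sum>u\<in>Deg K 0. hcounit K u * hcomult K a c u) = (if a = c then 1 else 0)) \<and>
     (\<forall>a c1 c2 c3. (\<Sum>x\<in>Deg K (hdeg K c1 + hdeg K c2). hcomult K a x c3 * hcomult K x c1 c2) =
                   (\<Sum>y\<in>Deg K (hdeg K c2 + hdeg K c3). hcomult K a c1 y * hcomult K y c2 c3)) \<and>
     \<comment> \<open>bialgebra compatibility: Delta 1 = 1 tensor 1, Delta (a b) = Delta a Delta b\<close>
     (\<forall>c1 c2. hcomult K (hunit K) c1 c2 = (if c1 = hunit K \<and> c2 = hunit K then 1 else 0)) \<and>
     (\<forall>a b c1 c2. (\<Sum>x\<in>Deg K (hdeg K a + hdeg K b). hmult K a b x * hcomult K x c1 c2) =
        (\<Sum>(u, v)\<in>Split K (hdeg K a) \<times> Split K (hdeg K b).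
            hcomult K a (fst u) (snd u) * hcomult K b (fst v) (snd v) *
            hmult K (fst u) (fst v) c1 * hmult K (snd u) (snd v) c2)) \<and>
     \<comment> \<open>antipode: m (S tensor id) Delta = m (id tensor S) Delta = unit o counit\<close>
     (\<forall>a c. (\<Sum>(u1, u2)\<in>Split K (hdeg K a). hcomult K a u1 u2 *
              (\<Sum>w\<in>Deg K (hdeg K u1). hantip K u1 w * hmult K w u2 c)) =
            hcounit K a * (if c = hunit K then 1 else 0)) \<and>
     (\<forall>a c. (\<Sum>(u1, u2)\<in>Split K (hdeg K a). hcomult K a u1 u2 *
              (\<Sum>w\<in>Deg K (hdeg K u2). hantip K u2 w * hmult K u1 w c)) =
            hcounit K a * (if c = hunit K then 1 else 0))"

text \<open>Graded dual, in the dual basis (delta_b)(c) = [b = c]: product is dual to the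
  coproduct, coproduct dual to the product, antipode is the transpose.\<close>
definition hdual :: "('b, 'k) hopf_data \<Rightarrow> ('b, 'k) hopf_data" where
  "hdual K = \<lparr> hdeg = hdeg K, hunit = hunit K,
              hmult = (\<lambda>c1 c2 b. hcomult K b c1 c2),
              hcomult = (\<lambda>b c1 c2. hmult K c1 c2 b),
              hantip = (\<lambda>b c. hantip K c b) \<rparr>"

definition supp :: "('b \<Rightarrow> 'k::zero) \<Rightarrow> 'b set" where
  "supp x = {b. x b \<noteq> 0}"

definition fin_elem :: "('b \<Rightarrow> 'k::zero) \<Rightarrow> bool" where
  "fin_elem x \<longleftrightarrow> finite (supp x)"

definition lin :: "('b \<Rightarrow> 'k::field) \<Rightarrow> ('b \<Rightarrow> 'k) \<Rightarrow> 'k" where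
  "lin \<theta> x = (\<Sum>b\<in>supp x. x b * \<theta> b)"

definition is_character :: "('b, 'k::field) hopf_data \<Rightarrow> ('b \<Rightarrow> 'k) \<Rightarrow> bool" where
  "is_character K \<theta> \<longleftrightarrow> \<theta> (hunit K) = 1 \<and>
     (\<forall>a b. \<theta> a * \<theta> b = (\<Sum>c\<in>Deg K (hdeg K a + hdeg K b). hmult K a b c * \<theta> c))"

definition bar :: "('b, 'k::field) hopf_data \<Rightarrow> ('b \<Rightarrow> 'k) \<Rightarrow> 'b \<Rightarrow> 'k" where
  "bar K \<theta> b = (-1) ^ hdeg K b * \<theta> b"

text \<open>theta^{-1} = theta o S.\<close>
definition char_inv :: "('b, 'k::field) hopf_data \<Rightarrow> ('b \<Rightarrow> 'k) \<Rightarrow> 'b \<Rightarrow> 'k" where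
  "char_inv K \<theta> b = (\<Sum>c\<in>Deg K (hdeg K b). hantip K b c * \<theta> c)"

definition even_char :: "('b, 'k::field) hopf_data \<Rightarrow> ('b \<Rightarrow> 'k) \<Rightarrow> bool" where
  "even_char K \<theta> \<longleftrightarrow> bar K \<theta> = \<theta>"

definition odd_char :: "('b, 'k::field) hopf_data \<Rightarrow> ('b \<Rightarrow> 'k) \<Rightarrow> bool" where
  "odd_char K \<theta> \<longleftrightarrow> bar K \<theta> = char_inv K \<theta>"

definition cop :: "('b, 'k::field) hopf_data \<Rightarrow> ('b \<Rightarrow> 'k) \<Rightarrow> 'b \<times> 'b \<Rightarrow> 'k" where
  "cop K x = (\<lambda>(u, v). \<Sum>b\<in>supp x. x b * hcomult K b u v)"

text \<open>C tensor C: finite sums of elementary tensors x tensor y with x, y in C.\<close>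
definition tensor_sub :: "('b \<Rightarrow> 'k::field) set \<Rightarrow> ('b \<times> 'b \<Rightarrow> 'k) set" where
  "tensor_sub C = {t. \<exists>ps. set ps \<subseteq> C \<times> C \<and>
                        t = (\<lambda>(u, v). \<Sum>(x, y)\<leftarrow>ps. x u * y v)}"

definition proj :: "('b, 'k::field) hopf_data \<Rightarrow> nat \<Rightarrow> ('b \<Rightarrow> 'k) \<Rightarrow> 'b \<Rightarrow> 'k" where
  "proj K n x = (\<lambda>b. if hdeg K b = n then x b else 0)"

definition graded_subcoalgebra :: "('b, 'k::field) hopf_data \<Rightarrow> ('b \<Rightarrow> 'k) set \<Rightarrow> bool" where
  "graded_subcoalgebra K C \<longleftrightarrow>
     (\<forall>x\<in>C. fin_elem x) \<and> (\<lambda>_. 0) \<in> C \<and>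
     (\<forall>x\<in>C. \<forall>y\<in>C. (\<lambda>b. x b + y b) \<in> C) \<and>
     (\<forall>x\<in>C. \<forall>a. (\<lambda>b. a * x b) \<in> C) \<and>
     (\<forall>x\<in>C. \<forall>n. proj K n x \<in> C) \<and>
     (\<forall>x\<in>C. cop K x \<in> tensor_sub C)"

text \<open>S_+(K,theta), S_-(K,theta): the largest graded subcoalgebra on which bar theta agrees
  with theta (resp. theta^{-1}). As a set it equals the union of all such subcoalgebras
  (the largest one is among them and contains all of them).\<close>
definition S_plus :: "('b, 'k::field) hopf_data \<Rightarrow> ('b \<Rightarrow> 'k) \<Rightarrow> ('b \<Rightarrow> 'k) set" where
  "S_plus K \<theta> = \<Union>{C. graded_subcoalgebra K C \<and> (\<forall>x\<in>C. lin (bar K \<theta>) x = lin \<theta> x)}"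

definition S_minus :: "('b, 'k::field) hopf_data \<Rightarrow> ('b \<Rightarrow> 'k) \<Rightarrow> ('b \<Rightarrow> 'k) set" where
  "S_minus K \<theta> = \<Union>{C. graded_subcoalgebra K C \<and>
                        (\<forall>x\<in>C. lin (bar K \<theta>) x = lin (char_inv K \<theta>) x)}"

text \<open>zeta_n = zeta restricted to H_n, as an element of the graded dual (dual basis coords).\<close>
definition hcomp :: "('b, 'k::field) hopf_data \<Rightarrow> ('b \<Rightarrow> 'k) \<Rightarrow> nat \<Rightarrow> 'b \<Rightarrow> 'k" where
  "hcomp K \<zeta> n = (\<lambda>b. if hdeg K b = n then \<zeta> b else 0)"

end

theory Submission
  imports Defs
begin

lemma finDeg: assumes "is_hopf H" shows "finite (Deg H n)"
  using assms unfolding is_hopf_def by (elim conjE) blast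

lemma mult_grad: assumes "is_hopf H" "hmult H a b c \<noteq> 0" shows "hdeg H c = hdeg H a + hdeg H b"
  using assms unfolding is_hopf_def by (elim conjE) blast

lemma antip_grad: assumes "is_hopf H" "hantip H a b \<noteq> 0" shows "hdeg H b = hdeg H a"
  using assms unfolding is_hopf_def by (elim conjE) blast

definition CC :: "('b, 'k::field) hopf_data \<Rightarrow> ('b \<Rightarrow> 'k) \<Rightarrow> ('b \<Rightarrow> 'k) set" where
  "CC H \<zeta> = {x. \<exists>a. finite {n. a n \<noteq> 0} \<and> x = (\<lambda>b. a (hdeg H b) * \<zeta> b)}"

lemma fin_lem:
  assumes "is_hopf H" "finite {n. a n \<noteq> 0}"
  shows "fin_elem (\<lambda>b. a (hdeg H b) * (\<zeta> b :: 'k::field))"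
proof -
  have "supp (\<lambda>b. a (hdeg H b) * \<zeta> b) \<subseteq> (\<Union>n\<in>{n. a n \<noteq> 0}. Deg H n)"
    by (auto simp: supp_def Deg_def)
  moreover have "finite (\<Union>n\<in>{n. a n \<noteq> 0}. Deg H n)"
    using assms finDeg by auto
  ultimately show ?thesis unfolding fin_elem_def by (meson finite_subset)
qed

lemma lin_expand:
  assumes "is_hopf H" "finite N" "{n. a n \<noteq> 0} \<subseteq> N"
  shows "lin \<theta> (\<lambda>b. a (hdeg H b) * (\<zeta> b :: 'k::field)) =
         (\<Sum>n\<in>N. \<Sum>b\<in>Deg H n. a n * \<zeta> b * \<theta> b)"
proof -
  define x where "x = (\<lambda>b. a (hdeg H b) * \<zeta> b)"
  define D where "D = (\<Union>n\<in>N. Deg H n)"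
  have fD: "finite D" using assms finDeg unfolding D_def by auto
  have sD: "supp x \<subseteq> D" using assms(3) by (auto simp: supp_def Deg_def D_def x_def)
  have "lin \<theta> x = (\<Sum>b\<in>D. x b * \<theta> b)"
    unfolding lin_def
    by (rule sum.mono_neutral_left[OF fD sD]) (auto simp: supp_def)
  also have "\<dots> = (\<Sum>n\<in>N. \<Sum>b\<in>Deg H n. x b * \<theta> b)"
    unfolding D_def
    by (rule sum.UNION_disjoint) (use assms finDeg in \<open>auto simp: Deg_def\<close>)
  also have "\<dots> = (\<Sum>n\<in>N. \<Sum>b\<in>Deg H n. a n * \<zeta> b * \<theta> b)"
    by (intro sum.cong refl) (auto simp: x_def Deg_def)
  finally show ?thesis unfolding x_def .
qed

lemma cop_lem:
  assumes H: "is_hopf H" and Z: "is_character H \<zeta>" and fa: "finite {n. a n \<noteq> 0}"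
  shows "cop (hdual H) (\<lambda>b. a (hdeg H b) * (\<zeta> b :: 'k::field)) (u, v) =
         a (hdeg H u + hdeg H v) * \<zeta> u * \<zeta> v"
proof -
  define x where "x = (\<lambda>b. a (hdeg H b) * \<zeta> b)"
  define n where "n = hdeg H u + hdeg H v"
  define g where "g = (\<lambda>b. x b * hmult H u v b)"
  have fx: "finite (supp x)" using fin_lem[OF H fa] unfolding x_def fin_elem_def by simp
  have fn: "finite (Deg H n)" using H finDeg by blast
  have gr: "\<And>b. hmult H u v b \<noteq> 0 \<Longrightarrow> hdeg H b = n"
    using mult_grad[OF H] unfolding n_def by blast
  have "cop (hdual H) x (u, v) = (\<Sum>b\<in>supp x. g b)"
    by (simp add: cop_def hdual_def g_def)
  also have "\<dots> = (\<Sum>b\<in>supp x \<union> Deg H n. g b)"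
    by (rule sum.mono_neutral_left) (use fx fn in \<open>auto simp: g_def supp_def\<close>)
  also have "\<dots> = (\<Sum>b\<in>Deg H n. g b)"
    by (rule sum.mono_neutral_right) (use fx fn gr in \<open>auto simp: g_def supp_def Deg_def\<close>)
  also have "\<dots> = a n * (\<Sum>b\<in>Deg H n. hmult H u v b * \<zeta> b)"
    by (auto simp: sum_distrib_left g_def x_def Deg_def intro!: sum.cong)
  also have "\<dots> = a n * (\<zeta> u * \<zeta> v)"
    using Z unfolding is_character_def n_def by simp
  finally show ?thesis by (simp add: x_def n_def mult.assoc)
qed

lemma CC_sub:
  fixes H :: "('b, 'k::field) hopf_data"
  assumes H: "is_hopf H" and Z: "is_character H \<zeta>"
  shows "graded_subcoalgebra (hdual H) (CC H \<zeta>)"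
  unfolding graded_subcoalgebra_def
proof (intro conjI ballI allI)
  fix x assume "x \<in> CC H \<zeta>"
  then obtain a where fa: "finite {n. a n \<noteq> 0}" and x: "x = (\<lambda>b. a (hdeg H b) * \<zeta> b)"
    unfolding CC_def by blast
  show "fin_elem x" using fin_lem[OF H fa] x by simp
  fix n
  show "proj (hdual H) n x \<in> CC H \<zeta>"
    unfolding CC_def
  proof (intro CollectI exI conjI)
    show "finite {m. (\<lambda>m. if m = n then a n else 0) m \<noteq> 0}"
      by (rule finite_subset[of _ "{n}"]) auto
    show "proj (hdual H) n x = (\<lambda>b. (\<lambda>m. if m = n then a n else 0) (hdeg H b) * \<zeta> b)"
      by (auto simp: proj_def hdual_def x)
  qed
next
  show "(\<lambda>_. 0) \<in> CC H \<zeta>" unfolding CC_def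
    by (intro CollectI exI[of _ "\<lambda>_. 0"]) auto
next
  fix x y assume "x \<in> CC H \<zeta>" "y \<in> CC H \<zeta>"
  then obtain a a' where fa: "finite {n. a n \<noteq> 0}" and x: "x = (\<lambda>b. a (hdeg H b) * \<zeta> b)"
    and fa': "finite {n. a' n \<noteq> 0}" and y: "y = (\<lambda>b. a' (hdeg H b) * \<zeta> b)"
    unfolding CC_def by blast
  show "(\<lambda>b. x b + y b) \<in> CC H \<zeta>" unfolding CC_def
  proof (intro CollectI exI conjI)
    show "finite {n. (\<lambda>n. a n + a' n) n \<noteq> 0}"
      by (rule finite_subset[of _ "{n. a n \<noteq> 0} \<union> {n. a' n \<noteq> 0}"]) (use fa fa' in auto)
    show "(\<lambda>b. x b + y b) = (\<lambda>b. (\<lambda>n. a n + a' n) (hdeg H b) * \<zeta> b)"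
      by (auto simp: x y algebra_simps)
  qed
next
  fix x c assume "x \<in> CC H \<zeta>"
  then obtain a where fa: "finite {n. a n \<noteq> 0}" and x: "x = (\<lambda>b. a (hdeg H b) * \<zeta> b)"
    unfolding CC_def by blast
  show "(\<lambda>b. c * x b) \<in> CC H \<zeta>" unfolding CC_def
  proof (intro CollectI exI conjI)
    show "finite {n. (\<lambda>n. c * a n) n \<noteq> 0}"
      by (rule finite_subset[OF _ fa]) auto
    show "(\<lambda>b. c * x b) = (\<lambda>b. (\<lambda>n. c * a n) (hdeg H b) * \<zeta> b)"
      by (auto simp: x algebra_simps)
  qed
next
  fix x assume "x \<in> CC H \<zeta>"
  then obtain a where fa: "finite {n. a n \<noteq> 0}" and x: "x = (\<lambda>b. a (hdeg H b) * \<zeta> b)"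
    unfolding CC_def by blast
  obtain M where M: "\<And>n. n \<ge> M \<Longrightarrow> a n = 0"
  proof -
    obtain m where "\<forall>n\<in>{n. a n \<noteq> 0}. n < m" using fa finite_nat_set_iff_bounded by blast
    then have "\<And>n. m \<le> n \<Longrightarrow> a n = 0" by force
    then show ?thesis using that by blast
  qed
  define f where "f = (\<lambda>(i::nat, j::nat). ((\<lambda>b. (\<lambda>m. if m = i then a (i + j) else 0) (hdeg H b) * \<zeta> b),
                                   (\<lambda>b. (\<lambda>m. if m = j then 1 else 0) (hdeg H b) * \<zeta> b)))"
  define ps where "ps = map f (List.product [0..<M] [0..<M])"
  show "cop (hdual H) x \<in> tensor_sub (CC H \<zeta>)"
    unfolding tensor_sub_def
  proof (intro CollectI exI conjI)
    show "set ps \<subseteq> CC H \<zeta> \<times> CC H \<zeta>"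
    proof
      fix p assume "p \<in> set ps"
      then obtain i j where p: "p = f (i, j)" unfolding ps_def by auto
      have f1: "finite {m. (\<lambda>m. if m = i then a (i + j) else 0) m \<noteq> 0}"
        by (rule finite_subset[of _ "{i}"]) auto
      have f2: "finite {m. (\<lambda>m. if m = j then (1::'k) else 0) m \<noteq> 0}"
        by (rule finite_subset[of _ "{j}"]) auto
      show "p \<in> CC H \<zeta> \<times> CC H \<zeta>"
        unfolding p f_def CC_def prod.case mem_Sigma_iff
        by (intro conjI CollectI exI[where x="\<lambda>m. if m = i then a (i + j) else 0"]
                  exI[where x="\<lambda>m. if m = j then (1::'k) else 0"]) (use f1 f2 in simp_all)
    qed
    show "cop (hdual H) x = (\<lambda>(u, v). \<Sum>(x, y)\<leftarrow>ps. x u * y v)"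
    proof (rule ext, clarify)
      fix u v
      have "(\<Sum>(x, y)\<leftarrow>ps. x u * y v) =
            (\<Sum>p\<in>{0..<M} \<times> {0..<M}. (case f p of (x, y) \<Rightarrow> x u * y v))"
      proof -
        have d: "distinct (List.product [0..<M] [0..<M])" by (rule distinct_product) (rule distinct_upt)+
        have "(\<Sum>(x, y)\<leftarrow>map f (List.product [0..<M] [0..<M]). x u * y v) =
              sum_list (map (\<lambda>p. case f p of (x, y) \<Rightarrow> x u * y v) (List.product [0..<M] [0..<M]))"
          by (simp only: map_map comp_def)
        also have "\<dots> = (\<Sum>p\<in>{0..<M} \<times> {0..<M}. case f p of (x, y) \<Rightarrow> x u * y v)"
          by (subst sum_list_distinct_conv_sum_set[OF d]) (simp only: set_product set_upt)
        finally show ?thesis by (simp only: ps_def)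
      qed
      also have "\<dots> = (\<Sum>(i, j)\<in>{0..<M} \<times> {0..<M}.
            (if hdeg H u = i \<and> hdeg H v = j then a (hdeg H u + hdeg H v) * \<zeta> u * \<zeta> v else 0))"
      proof (intro sum.cong refl)
        fix p assume "p \<in> {0..<M} \<times> {0..<M}"
        obtain i j where p: "p = (i, j)" by (cases p)
        show "(case f p of (x, y) \<Rightarrow> x u * y v) = (case p of (i, j) \<Rightarrow>
            (if hdeg H u = i \<and> hdeg H v = j then a (hdeg H u + hdeg H v) * \<zeta> u * \<zeta> v else 0))"
          unfolding p f_def prod.case
          by (cases "hdeg H u = i"; cases "hdeg H v = j") simp_all
      qed
      also have "\<dots> = (\<Sum>i\<in>{0..<M}. \<Sum>j\<in>{0..<M}.
            (if hdeg H u = i \<and> hdeg H v = j then a (hdeg H u + hdeg H v) * \<zeta> u * \<zeta> v else 0))"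
        by (rule sum.cartesian_product[symmetric])
      also have "\<dots> = a (hdeg H u + hdeg H v) * \<zeta> u * \<zeta> v"
      proof -
        define X where "X = a (hdeg H u + hdeg H v) * \<zeta> u * \<zeta> v"
        have e: "\<And>i j. (if hdeg H u = i \<and> hdeg H v = j then X else 0) =
                   (if hdeg H u = i then (if hdeg H v = j then X else 0) else 0)" by simp
        have "(\<Sum>i\<in>{0..<M}. \<Sum>j\<in>{0..<M}. (if hdeg H u = i \<and> hdeg H v = j then X else 0))
              = (if hdeg H u \<in> {0..<M} then (if hdeg H v \<in> {0..<M} then X else 0) else 0)"
                  proof -
          have i: "\<And>i. (\<Sum>j\<in>{0..<M}. if hdeg H u = i then (if hdeg H v = j then X else 0) else 0)
                  = (if hdeg H u = i then (\<Sum>j\<in>{0..<M}. if hdeg H v = j then X else 0) else 0)"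
            by simp
          show ?thesis unfolding e i by (simp only: sum.delta' finite_atLeastLessThan)
        qed
        also have "\<dots> = X"
          using M[of "hdeg H u + hdeg H v"] by (auto simp: X_def)
        finally show ?thesis unfolding X_def .
      qed
      finally show "cop (hdual H) x (u, v) = (\<Sum>(x, y)\<leftarrow>ps. x u * y v)"
        using cop_lem[OF H Z fa, of u v] x by simp
    qed
  qed
qed

lemma hdual_simps [simp]:
  "hdeg (hdual H) = hdeg H" "Deg (hdual H) = Deg H" "hantip (hdual H) b c = hantip H c b"
  by (auto simp: hdual_def Deg_def intro!: ext)

lemma hcomp_CC:
  fixes H :: "('b, 'k::field) hopf_data"
  shows "hcomp H \<zeta> n \<in> CC H \<zeta>"
  unfolding CC_def
proof (intro CollectI exI conjI)
  show "finite {m. (\<lambda>m. if m = n then (1::'k) else 0) m \<noteq> 0}"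
    by (rule finite_subset[of _ "{n}"]) auto
  show "hcomp H \<zeta> n = (\<lambda>b. (\<lambda>m. if m = n then 1 else 0) (hdeg H b) * \<zeta> b)"
    by (auto simp: hcomp_def)
qed

lemma even_part:
  fixes H :: "('b, 'k::field) hopf_data"
  assumes E: "even_char H \<zeta>" and x: "x \<in> CC H \<zeta>"
  shows "lin (bar (hdual H) \<eta>) x = lin \<eta> x"
proof -
  obtain a where x: "x = (\<lambda>b. a (hdeg H b) * \<zeta> b)" using x unfolding CC_def by blast
  have z: "\<And>b. (-1) ^ hdeg H b * \<zeta> b = \<zeta> b"
    using E unfolding even_char_def bar_def by (metis)
  show ?thesis unfolding lin_def
  proof (intro sum.cong refl)
    fix b
    have "x b * bar (hdual H) \<eta> b = a (hdeg H b) * ((-1) ^ hdeg H b * \<zeta> b) * \<eta> b"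
      by (simp add: x bar_def)
    also have "\<dots> = x b * \<eta> b" using z[of b] by (simp add: x)
    finally show "x b * bar (hdual H) \<eta> b = x b * \<eta> b" .
  qed
qed

lemma odd_part:
  fixes H :: "('b, 'k::field) hopf_data"
  assumes H: "is_hopf H" and O: "odd_char H \<zeta>" and x: "x \<in> CC H \<zeta>"
  shows "lin (bar (hdual H) \<eta>) x = lin (char_inv (hdual H) \<eta>) x"
proof -
  obtain a where fa: "finite {n. a n \<noteq> 0}" and x: "x = (\<lambda>b. a (hdeg H b) * \<zeta> b)"
    using x unfolding CC_def by blast
  define N where "N = {n. a n \<noteq> 0}"
  have z: "\<And>c. (-1) ^ hdeg H c * \<zeta> c = (\<Sum>b\<in>Deg H (hdeg H c). hantip H c b * \<zeta> b)"
    using O unfolding odd_char_def bar_def char_inv_def by metis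
  have "lin (char_inv (hdual H) \<eta>) x =
        (\<Sum>n\<in>N. \<Sum>b\<in>Deg H n. a n * \<zeta> b * char_inv (hdual H) \<eta> b)"
    unfolding x by (rule lin_expand[OF H]) (use fa in \<open>auto simp: N_def\<close>)
  also have "\<dots> = (\<Sum>n\<in>N. \<Sum>b\<in>Deg H n. \<Sum>c\<in>Deg H n. a n * \<zeta> b * hantip H c b * \<eta> c)"
    by (intro sum.cong refl) (auto simp: char_inv_def Deg_def sum_distrib_left mult.assoc)
  also have "\<dots> = (\<Sum>n\<in>N. \<Sum>c\<in>Deg H n. \<Sum>b\<in>Deg H n. a n * \<zeta> b * hantip H c b * \<eta> c)"
    by (intro sum.cong refl sum.swap)
  also have "\<dots> = (\<Sum>n\<in>N. \<Sum>c\<in>Deg H n. a n * ((\<Sum>b\<in>Deg H n. hantip H c b * \<zeta> b)) * \<eta> c)"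
    by (intro sum.cong refl) (simp add: sum_distrib_left sum_distrib_right mult_ac)
  also have "\<dots> = (\<Sum>n\<in>N. \<Sum>c\<in>Deg H n. a n * ((-1) ^ hdeg H c * \<zeta> c) * \<eta> c)"
  proof (intro sum.cong refl)
    fix n c assume "c \<in> Deg H n"
    then have "hdeg H c = n" by (simp add: Deg_def)
    then show "a n * (\<Sum>b\<in>Deg H n. hantip H c b * \<zeta> b) * \<eta> c = a n * ((-1) ^ hdeg H c * \<zeta> c) * \<eta> c"
      using z[of c] by simp
  qed
  also have "\<dots> = (\<Sum>n\<in>N. \<Sum>c\<in>Deg H n. a n * \<zeta> c * bar (hdual H) \<eta> c)"
    by (intro sum.cong refl) (simp add: bar_def mult_ac)
  also have "\<dots> = lin (bar (hdual H) \<eta>) x"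
    unfolding x by (rule lin_expand[OF H, symmetric]) (use fa in \<open>auto simp: N_def\<close>)
  finally show ?thesis ..
qed

theorem proposition5p9:
  fixes H :: "('b, 'k::field) hopf_data" and \<zeta> \<eta> :: "'b \<Rightarrow> 'k"
  assumes "is_hopf H"
    and "is_character H \<zeta>"
    and "is_character (hdual H) \<eta>"
  shows "(even_char H \<zeta> \<longrightarrow> (\<forall>n. hcomp H \<zeta> n \<in> S_plus (hdual H) \<eta>)) \<and>
         (odd_char H \<zeta> \<longrightarrow> (\<forall>n. hcomp H \<zeta> n \<in> S_minus (hdual H) \<eta>))"
proof (intro conjI impI allI)
  fix n
  have G: "graded_subcoalgebra (hdual H) (CC H \<zeta>)" by (rule CC_sub[OF assms(1,2)])
  {
    assume E: "even_char H \<zeta>"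
    show "hcomp H \<zeta> n \<in> S_plus (hdual H) \<eta>"
      unfolding S_plus_def using G even_part[OF E] hcomp_CC by blast
  }
  {
    assume O: "odd_char H \<zeta>"
    show "hcomp H \<zeta> n \<in> S_minus (hdual H) \<eta>"
      unfolding S_minus_def using G odd_part[OF assms(1) O] hcomp_CC by blast
  }
qed

end
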